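(* Let $f$ be a measurable map preserving a probability measure $\mu$. Let $(U_n)$ and $(V_n)$ be two nested sequences of measurable sets ($U_{n+1}\subset U_n$, $V_{n+1}\subset V_n$) with $V_n\subset U_n$ and $\mu(V_n)>0$ for each $n$, and such that $\mu(U_n\setminus V_n)/\mu(U_n)\to0$ as $n\to\infty$. For $*\in\{U,V\}$ and $\ell\ge1$ put $$\hat\alpha^*_\ell=\lim_{K\to\infty}\lim_{n\to\infty}\mu_{*_n}\big(\tau^{\ell-1}_{*_n}\le K\big).$$ Then $\hat\alpha^U_\ell=\hat\alpha^V_\ell$ for every $\ell\ge1$ (i.e., for each $\ell$ the limits defining $\hat\alpha^U_\ell$ exist if and only if those defining $\hat\alpha^V_\ell$ exist, and then they coincide).
   Context: $\tau_W(x)=\min\{j\ge1:f^jx\in W\}$, $\tau^0_W=0$, $\tau^j_W=\tau^{j-1}_W+\tau_W\circ f^{\tau^{j-1}_W}$; $\mu_W(A)=\mu(A\cap W)/\mu(W)$. *)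

theory Defs
  imports "HOL-Probability.Probability" "HOL-Library.Extended_Nat"
begin

definition hit :: "('a \<Rightarrow> 'a) \<Rightarrow> 'a set \<Rightarrow> 'a \<Rightarrow> enat" where
  "hit f W x = (if \<exists>j\<ge>1. (f ^^ j) x \<in> W
                then enat (LEAST j. j \<ge> 1 \<and> (f ^^ j) x \<in> W) else \<infinity>)"

fun hitk :: "('a \<Rightarrow> 'a) \<Rightarrow> 'a set \<Rightarrow> nat \<Rightarrow> 'a \<Rightarrow> enat" where
  "hitk f W 0 x = 0"
| "hitk f W (Suc j) x =
     (case hitk f W j x of enat t \<Rightarrow> enat t + hit f W ((f ^^ t) x) | \<infinity> \<Rightarrow> \<infinity>)"

definition cond_meas :: "'a measure \<Rightarrow> 'a set \<Rightarrow> 'a set \<Rightarrow> real" where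
  "cond_meas M W A = measure M (A \<inter> W) / measure M W"

definition has_alpha_hat :: "'a measure \<Rightarrow> ('a \<Rightarrow> 'a) \<Rightarrow> (nat \<Rightarrow> 'a set) \<Rightarrow> nat \<Rightarrow> real \<Rightarrow> bool" where
  "has_alpha_hat M f W l a \<longleftrightarrow>
     (\<exists>g :: nat \<Rightarrow> real.
        (\<forall>K. (\<lambda>n. cond_meas M (W n) {x \<in> space M. hitk f (W n) (l - 1) x \<le> enat K})
               \<longlonglongrightarrow> g K)
      \<and> g \<longlonglongrightarrow> a)"

end

theory Submission imports Defs begin
lemma funpow_meas: "f \<in> measurable M M \<Longrightarrow> (f ^^ n) \<in> measurable M M"
  by (induction n) (auto intro: measurable_comp)

lemma hit_meas:
  assumes f: "f \<in> measurable M M" and W: "W \<in> sets M"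
  shows "hit f W \<in> measurable M (count_space UNIV)"
proof -
  have [measurable]: "\<And>j. (f ^^ j) \<in> measurable M M" using funpow_meas[OF f] .
  note [measurable] = W
  show ?thesis unfolding hit_def[abs_def] by measurable
qed

lemma hitk_meas:
  assumes f: "f \<in> measurable M M" and W: "W \<in> sets M"
  shows "hitk f W j \<in> measurable M (count_space UNIV)"
proof (induction j)
  case 0
  then show ?case by simp
next
  case (Suc j)
  have "(\<lambda>x. (\<lambda>v x. case v of enat t \<Rightarrow> enat t + hit f W ((f ^^ t) x) | \<infinity> \<Rightarrow> \<infinity>) (hitk f W j x) x)
        \<in> measurable M (count_space UNIV)"
  proof (rule measurable_compose_countable[OF _ Suc])
    fix v :: enat
    show "(\<lambda>x. case v of enat t \<Rightarrow> enat t + hit f W ((f ^^ t) x) | \<infinity> \<Rightarrow> \<infinity>) \<in> measurable M (count_space UNIV)"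
    proof (cases v)
      case (enat t)
      have "(\<lambda>x. hit f W ((f ^^ t) x)) \<in> measurable M (count_space UNIV)"
        using measurable_comp[OF funpow_meas[OF f] hit_meas[OF f W]] by (simp add: comp_def)
      then have "(\<lambda>x. enat t + hit f W ((f ^^ t) x)) \<in> measurable M (count_space UNIV)"
        using measurable_comp[of _ M "count_space UNIV" "\<lambda>y. enat t + y" "count_space UNIV"] by (simp add: comp_def)
      then show ?thesis using enat by simp
    qed simp
  qed
  then show ?case by simp
qed

lemma hit_agree:
  assumes h: "hit f U y \<le> enat m"
    and ag: "\<And>i. 1 \<le> i \<Longrightarrow> i \<le> m \<Longrightarrow> ((f ^^ i) y \<in> U \<longleftrightarrow> (f ^^ i) y \<in> V)"
  shows "hit f V y = hit f U y"
proof -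
  have ex: "\<exists>j\<ge>1. (f ^^ j) y \<in> U" using h by (auto simp: hit_def split: if_splits)
  define s where "s = (LEAST j. j \<ge> 1 \<and> (f ^^ j) y \<in> U)"
  have hs: "hit f U y = enat s" using ex by (simp add: hit_def s_def)
  have s1: "s \<ge> 1 \<and> (f ^^ s) y \<in> U" unfolding s_def using ex by (metis (mono_tags, lifting) LeastI)
  have smin: "\<And>j. j \<ge> 1 \<Longrightarrow> (f ^^ j) y \<in> U \<Longrightarrow> s \<le> j" unfolding s_def by (simp add: Least_le)
  have sm: "s \<le> m" using h hs by simp
  have sV: "(f ^^ s) y \<in> V" using ag s1 sm by blast
  have minV: "\<And>j. j \<ge> 1 \<Longrightarrow> (f ^^ j) y \<in> V \<Longrightarrow> s \<le> j"
  proof -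
    fix j assume j: "j \<ge> 1" "(f ^^ j) y \<in> V"
    show "s \<le> j"
    proof (rule ccontr)
      assume "\<not> s \<le> j"
      then have "(f ^^ j) y \<in> U" using ag j sm by auto
      then show False using smin j \<open>\<not> s \<le> j\<close> by auto
    qed
  qed
  have "(LEAST j. j \<ge> 1 \<and> (f ^^ j) y \<in> V) = s"
    by (rule Least_equality) (use s1 sV minV in auto)
  then have "hit f V y = enat s" using s1 sV by (auto simp: hit_def)
  then show ?thesis using hs by simp
qed

lemma hitk_agree:
  assumes ag: "\<And>i. 1 \<le> i \<Longrightarrow> i \<le> K \<Longrightarrow> ((f ^^ i) x \<in> U \<longleftrightarrow> (f ^^ i) x \<in> V)"
  shows "hitk f U j x \<le> enat K \<Longrightarrow> hitk f V j x = hitk f U j x"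
proof (induction j)
  case 0
  then show ?case by simp
next
  case (Suc j)
  obtain t where t: "hitk f U j x = enat t"
    using Suc.prems by (cases "hitk f U j x") auto
  have eq: "hitk f U (Suc j) x = enat t + hit f U ((f ^^ t) x)" using t by simp
  obtain s where s: "hit f U ((f ^^ t) x) = enat s"
    using Suc.prems eq by (cases "hit f U ((f ^^ t) x)") auto
  have ts: "t + s \<le> K" using Suc.prems eq s by simp
  have IH: "hitk f V j x = enat t" using Suc.IH t ts by simp
  have "hit f V ((f ^^ t) x) = hit f U ((f ^^ t) x)"
  proof (rule hit_agree[where m = s])
    show "hit f U ((f ^^ t) x) \<le> enat s" using s by simp
    fix i assume i: "1 \<le> i" "i \<le> s"
    have "(f ^^ i) ((f ^^ t) x) = (f ^^ (i + t)) x" by (simp add: funpow_add)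
    then show "((f ^^ i) ((f ^^ t) x) \<in> U) = ((f ^^ i) ((f ^^ t) x) \<in> V)"
      using ag[of "i + t"] i ts by simp
  qed
  then show ?case using IH t by simp
qed

lemma real_est:
  fixes a b u v d K :: real
  assumes "0 < v" "v \<le> u" "0 \<le> b" "b \<le> v" "\<bar>a - b\<bar> \<le> K * d" "d = u - v" "0 \<le> K"
  shows "\<bar>a / u - b / v\<bar> \<le> (K + 1) * d / u"
proof -
  have u: "0 < u" using assms by linarith
  have "a / u - b / v = (a - b) / u - (b / v) * (d / u)"
    using u assms(1) unfolding assms(6) by (simp add: field_simps)
  also have "\<bar>\<dots>\<bar> \<le> \<bar>a - b\<bar> / u + (b / v) * (d / u)"
  proof -
    have y: "0 \<le> (b / v) * (d / u)" using u assms by simp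
    have "\<bar>(a - b) / u - (b / v) * (d / u)\<bar> \<le> \<bar>(a - b) / u\<bar> + \<bar>(b / v) * (d / u)\<bar>"
      by (rule abs_triangle_ineq4)
    also have "\<dots> = \<bar>a - b\<bar> / u + (b / v) * (d / u)" using u y by (simp only: abs_divide abs_of_pos[OF u] abs_of_nonneg[OF y])
    finally show ?thesis .
  qed
  also have "\<dots> \<le> K * d / u + 1 * (d / u)"
  proof (rule add_mono)
    show "\<bar>a - b\<bar> / u \<le> K * d / u" using u assms by (simp add: divide_right_mono)
    show "b / v * (d / u) \<le> 1 * (d / u)"
      by (rule mult_right_mono) (use assms u in auto)
  qed
  also have "\<dots> = (K + 1) * d / u" by (simp add: add_divide_distrib distrib_right)
  finally show ?thesis .
qed

lemma funpow_preimage_measure: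
  assumes P: "prob_space M" and f: "f \<in> measurable M M" and d: "distr M M f = M" and D: "D \<in> sets M"
  shows "measure M ((f ^^ i) -` D \<inter> space M) = measure M D"
proof (induction i)
  case 0
  then show ?case using D by (simp add: Int_absorb2 sets.sets_into_space)
next
  case (Suc i)
  have S: "(f ^^ i) -` D \<inter> space M \<in> sets M" using measurable_sets[OF funpow_meas[OF f] D] .
  have "(f ^^ Suc i) -` D \<inter> space M = f -` ((f ^^ i) -` D \<inter> space M) \<inter> space M"
    using measurable_space[OF f] by (auto simp: funpow_swap1)
  also have "measure M \<dots> = measure (distr M M f) ((f ^^ i) -` D \<inter> space M)"
    using measure_distr[OF f, of "(f ^^ i) -` D \<inter> space M"] S by simp
  also have "\<dots> = measure M ((f ^^ i) -` D \<inter> space M)" using d by simp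
  finally show ?case using Suc.IH by (rule trans)
qed

lemma key_bound:
  assumes P: "prob_space M" and f: "f \<in> measurable M M" and d: "distr M M f = M"
    and U: "U \<in> sets M" and V: "V \<in> sets M" and VU: "V \<subseteq> U" and Vpos: "measure M V > 0"
  shows "\<bar>cond_meas M U {x \<in> space M. hitk f U j x \<le> enat K}
          - cond_meas M V {x \<in> space M. hitk f V j x \<le> enat K}\<bar>
         \<le> (real K + 2) * (measure M (U - V) / measure M U)"
proof -
  interpret prob_space M by (rule P)
  define AU where "AU = {x \<in> space M. hitk f U j x \<le> enat K}"
  define AV where "AV = {x \<in> space M. hitk f V j x \<le> enat K}"
  define D where "D = U - V"
  define E where "E = (\<Union>i\<in>{1..K}. (f ^^ i) -` D \<inter> space M)"
  have AUs: "AU \<in> sets M" unfolding AU_def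
    using measurable_sets[OF hitk_meas[OF f U, of j], of "{..enat K}"] by (simp add: vimage_def Int_def conj_commute)
  have AVs: "AV \<in> sets M" unfolding AV_def
    using measurable_sets[OF hitk_meas[OF f V, of j], of "{..enat K}"] by (simp add: vimage_def Int_def conj_commute)
  have Ds: "D \<in> sets M" unfolding D_def using U V by auto
  have Eis: "\<And>i. (f ^^ i) -` D \<inter> space M \<in> sets M" using measurable_sets[OF funpow_meas[OF f] Ds] .
  have Es: "E \<in> sets M" unfolding E_def by (rule sets.finite_UN) (auto intro: Eis)
  have agree: "x \<in> AU \<inter> U \<longleftrightarrow> x \<in> AV \<inter> V" if x: "x \<in> V" "x \<notin> E" "x \<in> space M" for x
  proof -
    have ag: "(f ^^ i) x \<in> U \<longleftrightarrow> (f ^^ i) x \<in> V" if "1 \<le> i" "i \<le> K" for i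
    proof -
      have "i \<in> {1..K}" using that by simp
      then have "x \<notin> (f ^^ i) -` D \<inter> space M" using x(2) unfolding E_def by blast
      then have "(f ^^ i) x \<notin> D" using x(3) by blast
      then show ?thesis using VU unfolding D_def by blast
    qed
    have ag': "(f ^^ i) x \<in> V \<longleftrightarrow> (f ^^ i) x \<in> U" if "1 \<le> i" "i \<le> K" for i
      using ag[OF that] by simp
    have h1: "hitk f V j x \<le> enat K" if "hitk f U j x \<le> enat K"
      using hitk_agree[of K f x U V j, OF ag that] that by simp
    have h2: "hitk f U j x \<le> enat K" if "hitk f V j x \<le> enat K"
      using hitk_agree[of K f x V U j, OF ag' that] that by simp
    show ?thesis unfolding AU_def AV_def using x(1,3) VU h1 h2 by blast
  qed
  have AUsp: "AU \<subseteq> space M" and AVsp: "AV \<subseteq> space M" unfolding AU_def AV_def by auto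
  have sub1: "AU \<inter> U \<subseteq> (AV \<inter> V) \<union> (D \<union> E)"
  proof
    fix x assume x: "x \<in> AU \<inter> U"
    show "x \<in> (AV \<inter> V) \<union> (D \<union> E)"
    proof (cases "x \<in> D \<or> x \<in> E")
      case False
      then have "x \<in> V" using x unfolding D_def by blast
      then show ?thesis using agree[of x] False x AUsp by blast
    qed blast
  qed
  have sub2: "AV \<inter> V \<subseteq> (AU \<inter> U) \<union> (D \<union> E)"
  proof
    fix x assume x: "x \<in> AV \<inter> V"
    show "x \<in> (AU \<inter> U) \<union> (D \<union> E)"
    proof (cases "x \<in> E")
      case False
      then show ?thesis using agree[of x] False x AVsp by blast
    qed blast
  qed
  have mE: "measure M E \<le> real K * measure M D"
  proof -
    have "measure M E \<le> (\<Sum>i\<in>{1..K}. measure M ((f ^^ i) -` D \<inter> space M))"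
      unfolding E_def by (rule measure_subadditive_finite) (use Eis emeasure_finite in auto)
    also have "\<dots> = (\<Sum>i\<in>{1..K}. measure M D)"
      using funpow_preimage_measure[OF P f d Ds] by simp
    finally show ?thesis by simp
  qed
  have mDE: "measure M (D \<union> E) \<le> real K * measure M D + measure M D"
    using measure_Un_le[OF Ds Es] mE by simp
  have a1: "measure M (AU \<inter> U) \<le> measure M (AV \<inter> V) + measure M (D \<union> E)"
    using finite_measure_mono[OF sub1] measure_Un_le[of "AV \<inter> V" M "D \<union> E"] AVs V Ds Es by auto
  have a2: "measure M (AV \<inter> V) \<le> measure M (AU \<inter> U) + measure M (D \<union> E)"
    using finite_measure_mono[OF sub2] measure_Un_le[of "AU \<inter> U" M "D \<union> E"] AUs U Ds Es by auto
  have ab: "\<bar>measure M (AU \<inter> U) - measure M (AV \<inter> V)\<bar> \<le> (real K + 1) * measure M D"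
    using a1 a2 mDE by (simp add: algebra_simps abs_le_iff)
  have dD: "measure M D = measure M U - measure M V"
    unfolding D_def using finite_measure_Diff[OF U V] VU by (simp add: Int_absorb2)
  have vu: "measure M V \<le> measure M U" using finite_measure_mono[OF VU U] .
  have bv: "measure M (AV \<inter> V) \<le> measure M V" using finite_measure_mono[of "AV \<inter> V" V] V by auto
  have "\<bar>measure M (AU \<inter> U) / measure M U - measure M (AV \<inter> V) / measure M V\<bar>
        \<le> (real K + 1 + 1) * measure M D / measure M U"
    by (rule real_est[OF Vpos vu measure_nonneg bv ab dD]) simp
  also have "\<dots> = (real K + 2) * (measure M D / measure M U)" by simp
  finally show ?thesis unfolding cond_meas_def AU_def[symmetric] AV_def[symmetric] D_def .
qed

theorem lemma5p5:
  fixes M :: "'a measure" and f :: "'a \<Rightarrow> 'a" and U V :: "nat \<Rightarrow> 'a set"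
    and l :: nat and a :: real
  assumes "prob_space M"
    and "f \<in> measurable M M" and "distr M M f = M"
    and "\<And>n. U n \<in> sets M" and "\<And>n. V n \<in> sets M"
    and "\<And>n. U (Suc n) \<subseteq> U n" and "\<And>n. V (Suc n) \<subseteq> V n"
    and "\<And>n. V n \<subseteq> U n" and "\<And>n. measure M (V n) > 0"
    and "(\<lambda>n. measure M (U n - V n) / measure M (U n)) \<longlonglongrightarrow> 0"
    and "l \<ge> 1"
  shows "has_alpha_hat M f U l a \<longleftrightarrow> has_alpha_hat M f V l a"
proof -
  define XU where "XU K n = cond_meas M (U n) {x \<in> space M. hitk f (U n) (l - 1) x \<le> enat K}" for K n
  define XV where "XV K n = cond_meas M (V n) {x \<in> space M. hitk f (V n) (l - 1) x \<le> enat K}" for K n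
  have diff0: "(\<lambda>n. XU K n - XV K n) \<longlonglongrightarrow> 0" for K
  proof (rule Lim_null_comparison)
    show "\<forall>\<^sub>F n in sequentially. norm (XU K n - XV K n) \<le> (real K + 2) * (measure M (U n - V n) / measure M (U n))"
      unfolding XU_def XV_def using key_bound[OF assms(1-3) assms(4,5,8,9)] by simp
    show "(\<lambda>n. (real K + 2) * (measure M (U n - V n) / measure M (U n))) \<longlonglongrightarrow> 0"
      using tendsto_mult_right_zero[OF assms(10)] by simp
  qed
  have equiv: "(XU K \<longlonglongrightarrow> c) \<longleftrightarrow> (XV K \<longlonglongrightarrow> c)" for K c
  proof
    assume "XU K \<longlonglongrightarrow> c"
    from tendsto_diff[OF this diff0[of K]] show "XV K \<longlonglongrightarrow> c" by simp
  next
    assume "XV K \<longlonglongrightarrow> c"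
    from tendsto_add[OF this diff0[of K]] show "XU K \<longlonglongrightarrow> c" by simp
  qed
  show ?thesis
    unfolding has_alpha_hat_def XU_def[symmetric] XV_def[symmetric]
    using equiv by (simp add: fun_eq_iff)
qed

end
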